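(* Let $n \geq 3$. If $Z : \mathcal{T}_o^n \to \mathcal{K}_o^n$ is an $\mathrm{SL}(n)$ contravariant $L_\infty$ Minkowski valuation, then $ZT= \{o\}$ for every $T \in \mathcal{T}_o^n$ with $\dim T < n$.
   Context: $\mathcal{K}_o^n$ denotes the set of convex bodies (compact convex sets) in $\mathbb{R}^n$ containing the origin $o$, and $\mathcal{T}_o^n$ the set of simplices (of any dimension) in $\mathbb{R}^n$ having the origin as one of their vertices. For $K,L\in\mathcal{K}_o^n$, $K+_\infty L$ is the convex body with support function $\max\{h_K,h_L\}$ ($h$ denoting support functions), i.e. the convex hull of $K\cup L$. $Z$ is an $L_\infty$ Minkowski valuation on $\mathcal{T}_o^n$ if $Z(K\cup L)+_\infty Z(K\cap L)=ZK+_\infty ZL$ whenever $K,L,K\cup L,K\cap L\in\mathcal{T}_o^n$. $Z$ is $\mathrm{SL}(n)$ contravariant if $Z(\phi K)=\phi^{-t}ZK$ for all $K$ and all $\phi\in\mathrm{SL}(n)$. *)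

theory Defs
  imports "HOL-Analysis.Analysis"
begin

definition convex_bodies_o :: "(real^'n) set set" where
  "convex_bodies_o = {K. compact K \<and> convex K \<and> 0 \<in> K}"

definition simplices_o :: "(real^'n) set set" where
  "simplices_o = {T. \<exists>V. finite V \<and> \<not> affine_dependent V \<and> 0 \<in> V \<and> T = convex hull V}"

definition linf_plus :: "(real^'n) set \<Rightarrow> (real^'n) set \<Rightarrow> (real^'n) set" where
  "linf_plus K L = convex hull (K \<union> L)"

definition linf_valuation_on_simplices :: "((real^'n) set \<Rightarrow> (real^'n) set) \<Rightarrow> bool" where
  "linf_valuation_on_simplices Z \<longleftrightarrow>
     (\<forall>K L. K \<in> simplices_o \<and> L \<in> simplices_o \<and> K \<union> L \<in> simplices_o \<and> K \<inter> L \<in> simplices_o \<longrightarrow>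
        linf_plus (Z (K \<union> L)) (Z (K \<inter> L)) = linf_plus (Z K) (Z L))"

definition SL_contravariant_on_simplices :: "((real^'n) set \<Rightarrow> (real^'n) set) \<Rightarrow> bool" where
  "SL_contravariant_on_simplices Z \<longleftrightarrow>
     (\<forall>A :: real^'n^'n. \<forall>K \<in> simplices_o. det A = 1 \<longrightarrow>
        Z ((\<lambda>x. A *v x) ` K) = (\<lambda>x. matrix_inv (transpose A) *v x) ` Z K)"

end

theory Submission
  imports Defs
begin

definition rk1 :: "real^'n \<Rightarrow> real^'n \<Rightarrow> real^'n \<Rightarrow> real^'n" where
  "rk1 a b x = x + (b \<bullet> x) *\<^sub>R a"

lemma linear_rk1: "linear (rk1 a b)"
  by (rule linearI) (auto simp: rk1_def inner_add_right algebra_simps)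

lemma adjoint_rk1: "adjoint (rk1 a b) = rk1 b a"
  by (rule adjoint_unique) (simp add: rk1_def inner_add_left inner_add_right inner_commute algebra_simps)

lemma matrix_rk1: "matrix (rk1 a b) = (\<chi> i j. (if i = j then 1 else 0) + a$i * b$j)"
proof -
  have "b \<bullet> axis j 1 = b$j" for j by (simp add: inner_axis)
  then show ?thesis by (simp add: matrix_def rk1_def vec_eq_iff mult.commute) (simp add: axis_def)
qed

lemma det_one_row:
  fixes r :: "real^'n"
  shows "det ((\<chi> i. if i = k then r else axis i 1) :: real^'n^'n) = r$k"
proof -
  let ?A = "(\<chi> i. if i = k then (r$k) *\<^sub>R axis k 1 else axis i 1) :: real^'n^'n"
  have dA: "det ?A = r$k"
  proof -
    have "det ?A = (\<Prod>i\<in>UNIV. ?A$i$i)" by (rule det_diagonal) (auto simp: axis_def)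
    also have "\<dots> = (\<Prod>i\<in>UNIV. if i = k then r$k else 1)" by (rule prod.cong) (auto simp: axis_def)
    finally show ?thesis by simp
  qed
  have rows: "row j ?A = (if j = k then (r$k) *\<^sub>R axis k 1 else axis j 1)" for j
    by (simp add: row_def)
  have "r = (\<Sum>j\<in>UNIV. r$j *\<^sub>R axis j 1)"
    by (simp add: vec_eq_iff axis_def sum.delta if_distrib cong: if_cong)
  also have "\<dots> = r$k *\<^sub>R axis k 1 + (\<Sum>j\<in>UNIV-{k}. r$j *\<^sub>R axis j 1)"
    by (simp add: sum.remove)
  finally have r: "r - r$k *\<^sub>R axis k 1 = (\<Sum>j\<in>UNIV-{k}. r$j *\<^sub>R axis j 1)" by (metis add_diff_cancel_left')
  have x: "r - r$k *\<^sub>R axis k 1 \<in> vec.span {row j ?A |j. j \<noteq> k}"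
    unfolding r span_vec_eq
    by (intro span_sum span_mul span_base) (auto simp: rows)
  have "det (\<chi> i. if i = k then row k ?A + (r - r$k *\<^sub>R axis k 1) else row i ?A) = det ?A"
    by (rule det_row_span[OF x])
  moreover have "(\<chi> i. if i = k then row k ?A + (r - r$k *\<^sub>R axis k 1) else row i ?A) = (\<chi> i. if i = k then r else axis i 1)"
    by (simp add: rows vec_eq_iff)
  ultimately show ?thesis using dA by simp
qed

lemma rk1_0: "rk1 0 b = id"
  by (simp add: rk1_def fun_eq_iff)

lemma det_rk1: fixes a b :: "real^'n" shows "det (matrix (rk1 a b)) = 1 + a \<bullet> b"
proof (cases "a = 0")
  case True
  then show ?thesis by (simp add: rk1_0 matrix_id_mat_1)
next
  case False
  then obtain k where ak: "a$k \<noteq> 0" by (auto simp: vec_eq_iff)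
  define C :: "real^'n^'n" where "C = (\<chi> i j. if j = k then a$i else (if i = j then 1 else 0))"
  define b' :: "real^'n" where "b' = (\<chi> j. \<Sum>l\<in>UNIV. b$l * C$l$j)"
  define M :: "real^'n^'n" where "M = (\<chi> i. if i = k then axis k 1 + b' else axis i 1)"
  have "transpose C = (\<chi> i. if i = k then a else axis i 1)"
    by (auto simp: C_def transpose_def vec_eq_iff axis_def)
  then have dC: "det C = a$k"
    by (metis det_transpose det_one_row)
  have dM: "det M = 1 + a \<bullet> b"
  proof -
    have "det M = (axis k 1 + b')$k" unfolding M_def by (rule det_one_row)
    also have "\<dots> = 1 + (\<Sum>l\<in>UNIV. b$l * a$l)" by (simp add: b'_def C_def)
    also have "\<dots> = 1 + a \<bullet> b" by (simp add: inner_vec_def mult.commute)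
    finally show ?thesis .
  qed
  have M': "M$l$j = (if l = j then 1 else 0) + (if l = k then b'$j else 0)" for l j
    by (simp add: M_def axis_def)
  have "C ** M = matrix (rk1 a b) ** C"
  proof -
    have "(C ** M)$i$j = C$i$j + a$i * b'$j" for i j
    proof -
      have "(C ** M)$i$j = (\<Sum>l\<in>UNIV. C$i$l * ((if l = j then 1 else 0) + (if l = k then b'$j else 0)))"
        by (simp add: matrix_matrix_mult_def M')
      also have "\<dots> = (\<Sum>l\<in>UNIV. (if l = j then C$i$l else 0)) + (\<Sum>l\<in>UNIV. (if l = k then C$i$l * b'$j else 0))"
        by (subst sum.distrib[symmetric]) (rule sum.cong, auto simp: algebra_simps)
      also have "\<dots> = C$i$j + C$i$k * b'$j"
        by (simp add: sum.delta)
      also have "C$i$k = a$i" by (simp add: C_def)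
      finally show ?thesis by simp
    qed
    moreover have "(matrix (rk1 a b) ** C)$i$j = C$i$j + a$i * b'$j" for i j
    proof -
      have "(matrix (rk1 a b) ** C)$i$j = (\<Sum>l\<in>UNIV. ((if i = l then 1 else 0) + a$i * b$l) * C$l$j)"
        by (simp add: matrix_matrix_mult_def matrix_rk1)
      also have "\<dots> = (\<Sum>l\<in>UNIV. (if i = l then C$l$j else 0)) + (\<Sum>l\<in>UNIV. a$i * (b$l * C$l$j))"
        by (subst sum.distrib[symmetric]) (rule sum.cong, auto simp: algebra_simps)
      also have "\<dots> = C$i$j + a$i * (\<Sum>l\<in>UNIV. b$l * C$l$j)"
        by (simp add: sum.delta sum_distrib_left)
      finally show ?thesis by (simp add: b'_def)
    qed
    ultimately show ?thesis by (simp add: vec_eq_iff)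
  qed
  then have "det C * det M = det (matrix (rk1 a b)) * det C"
    by (metis det_mul)
  with dC dM ak show ?thesis by simp
qed

lemma matrix_inv_eq:
  fixes A B :: "real^'n^'n"
  assumes "A ** B = mat 1" "B ** A = mat 1"
  shows "matrix_inv A = B"
proof -
  have ex: "\<exists>A'. A ** A' = mat 1 \<and> A' ** A = mat 1" using assms by blast
  have "A ** matrix_inv A = mat 1 \<and> matrix_inv A ** A = mat 1"
    unfolding matrix_inv_def by (rule someI_ex[OF ex])
  then have "matrix_inv A = matrix_inv A ** (A ** B)" using assms by (simp add: matrix_mul_rid)
  also have "\<dots> = (matrix_inv A ** A) ** B" by (simp add: matrix_mul_assoc)
  also have "\<dots> = B" using \<open>A ** matrix_inv A = mat 1 \<and> matrix_inv A ** A = mat 1\<close> by (simp add: matrix_mul_lid)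
  finally show ?thesis .
qed

lemma contra:
  fixes Z :: "(real^'n) set \<Rightarrow> (real^'n) set" and f h :: "real^'n \<Rightarrow> real^'n"
  assumes SL: "SL_contravariant_on_simplices Z" and K: "K \<in> simplices_o"
    and lf: "linear f" and lh: "linear h" and d: "det (matrix f) = 1"
    and i1: "\<And>y. adjoint f (h y) = y" and i2: "\<And>y. h (adjoint f y) = y"
  shows "Z (f ` K) = h ` Z K"
proof -
  have la: "linear (adjoint f)" by (rule adjoint_linear[OF lf])
  have "matrix (adjoint f) ** matrix h = matrix (adjoint f \<circ> h)"
    by (simp add: matrix_compose[OF lh la])
  also have "adjoint f \<circ> h = id" using i1 by (simp add: fun_eq_iff)
  finally have m1: "matrix (adjoint f) ** matrix h = mat 1" by (metis matrix_id_mat_1)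
  have "matrix h ** matrix (adjoint f) = matrix (h \<circ> adjoint f)"
    by (simp add: matrix_compose[OF la lh])
  also have "h \<circ> adjoint f = id" using i2 by (simp add: fun_eq_iff)
  finally have m2: "matrix h ** matrix (adjoint f) = mat 1" by (metis matrix_id_mat_1)
  have mi: "matrix_inv (transpose (matrix f)) = matrix h"
    using matrix_adjoint[OF lf] matrix_inv_eq[OF m1 m2] by simp
  have "Z ((\<lambda>x. matrix f *v x) ` K) = (\<lambda>x. matrix_inv (transpose (matrix f)) *v x) ` Z K"
    using SL K d unfolding SL_contravariant_on_simplices_def by blast
  then show ?thesis unfolding mi using lf lh by simp
qed

lemma inv_line:
  fixes Z :: "(real^'n) set \<Rightarrow> (real^'n) set"
  assumes SL: "SL_contravariant_on_simplices Z" and T: "T \<in> simplices_o"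
    and bd: "bounded (Z T)" and u: "u \<noteq> 0" and orth: "\<forall>x\<in>T. u \<bullet> x = 0" and y: "y \<in> Z T"
  shows "\<exists>c. y = c *\<^sub>R u"
proof -
  have key: "y + (t * (w \<bullet> y)) *\<^sub>R u \<in> Z T" if wu: "w \<bullet> u = 0" for w t
  proof -
    let ?f = "rk1 (- (t *\<^sub>R w)) u"
    let ?h = "rk1 u (t *\<^sub>R w)"
    have fT: "?f ` T = T"
    proof -
      have "?f x = x" if "x \<in> T" for x using orth that by (simp add: rk1_def)
      then show ?thesis by (simp add: image_cong[OF refl, of T ?f id])
    qed
    have "Z (?f ` T) = ?h ` Z T"
    proof (rule contra[OF SL T linear_rk1 linear_rk1])
      show "det (matrix ?f) = 1" using wu by (simp add: det_rk1 inner_commute)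
      show "adjoint ?f (?h z) = z" for z
        using wu by (simp add: adjoint_rk1 rk1_def inner_add_right inner_commute algebra_simps)
      show "?h (adjoint ?f z) = z" for z
        using wu by (simp add: adjoint_rk1 rk1_def inner_add_right inner_commute algebra_simps)
    qed
    then have "Z T = ?h ` Z T" using fT by simp
    then have "?h y \<in> Z T" using y by blast
    then show ?thesis by (simp add: rk1_def inner_commute mult.commute)
  qed
  obtain B where B: "\<And>z. z \<in> Z T \<Longrightarrow> norm z \<le> B" using bd by (auto simp: bounded_iff)
  have wy: "w \<bullet> y = 0" if wu: "w \<bullet> u = 0" for w
  proof (rule ccontr)
    assume ne: "w \<bullet> y \<noteq> 0"
    define t where "t = (B + norm y + 1) / ((w \<bullet> y) * norm u)"
    have nu: "norm u > 0" using u by simp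
    have "t * (w \<bullet> y) * norm u = B + norm y + 1"
      using ne nu unfolding t_def by (simp add: field_simps)
    moreover have "norm ((t * (w \<bullet> y)) *\<^sub>R u) = \<bar>t * (w \<bullet> y)\<bar> * norm u" by simp
    moreover have "B + norm y + 1 > 0" using B[OF y] norm_ge_zero[of y] by linarith
    ultimately have n1: "norm ((t * (w \<bullet> y)) *\<^sub>R u) = B + norm y + 1"
      by (metis abs_of_pos mult_pos_pos nu zero_less_mult_pos2 abs_mult abs_of_nonneg norm_ge_zero mult.assoc)
    have "norm ((t * (w \<bullet> y)) *\<^sub>R u) \<le> norm (y + (t * (w \<bullet> y)) *\<^sub>R u) + norm y"
      by (metis add.commute add_diff_cancel_left' norm_triangle_ineq4 add_diff_cancel_right')
    with B[OF key[OF wu, of t]] n1 show False by linarith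
  qed
  define c where "c = (y \<bullet> u) / (u \<bullet> u)"
  define w where "w = y - c *\<^sub>R u"
  have uu: "u \<bullet> u \<noteq> 0" using u by simp
  have "w \<bullet> u = 0" using uu by (simp add: w_def c_def inner_diff_left)
  then have "w \<bullet> y = 0" by (rule wy)
  then have "w \<bullet> w = 0" using \<open>w \<bullet> u = 0\<close> by (simp add: w_def inner_diff_right inner_commute)
  then have "w = 0" by simp
  then show ?thesis unfolding w_def by auto
qed

lemma lowdim:
  fixes Z :: "(real^'n) set \<Rightarrow> (real^'n) set"
  assumes SL: "SL_contravariant_on_simplices Z"
    and bodies: "\<forall>T \<in> simplices_o. Z T \<in> convex_bodies_o"
    and T: "T \<in> simplices_o" and sub: "T \<subseteq> span W" and dW: "dim W + 2 \<le> CARD('n)"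
  shows "Z T = {0}"
proof -
  have ZT: "compact (Z T)" "0 \<in> Z T" using bodies T by (auto simp: convex_bodies_o_def)
  define S where "S = {y \<in> UNIV. \<forall>x \<in> span W. orthogonal x y}"
  have "dim S + dim (span W) = dim (UNIV :: (real^'n) set)"
    unfolding S_def by (rule dim_subspace_orthogonal_to_vectors) (auto simp: subspace_span)
  then have dS: "dim S \<ge> 2" using dW by simp
  have "Z T \<subseteq> {0}"
  proof
    fix y assume y: "y \<in> Z T"
    show "y \<in> {0}"
    proof (rule ccontr)
      assume "y \<notin> {0}" then have y0: "y \<noteq> 0" by simp
      have "S \<subseteq> span {y}"
      proof
        fix u assume uS: "u \<in> S"
        show "u \<in> span {y}"
        proof (cases "u = 0")
          case True then show ?thesis by (simp add: span_zero)
        next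
          case False
          have "\<forall>x\<in>T. u \<bullet> x = 0" using uS sub by (auto simp: S_def orthogonal_def inner_commute)
          then obtain c where c: "y = c *\<^sub>R u"
            using inv_line[OF SL T compact_imp_bounded[OF ZT(1)] False _ y] by blast
          with y0 have "c \<noteq> 0" by auto
          then have "u = (1/c) *\<^sub>R y" using c by simp
          then show ?thesis by (simp add: span_mul span_base)
        qed
      qed
      then have "dim S \<le> dim (span {y})" by (rule dim_subset)
      then have "dim S \<le> 1" using y0 by simp
      with dS show False by simp
    qed
  qed
  with ZT(2) show ?thesis by blast
qed

lemma sum4:
  assumes "finite R" "p \<noteq> q" "p \<noteq> 0" "q \<noteq> 0" "0 \<notin> R" "p \<notin> R" "q \<notin> R"
  shows "sum F (insert 0 (insert p (insert q R))) = F 0 + F p + F q + sum F R"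
  using assms by (simp add: sum.insert add.assoc)

lemma cut:
  fixes p q e x P :: "real^'n" and C :: "(real^'n) set"
  assumes R: "finite R" and d: "p \<noteq> q" "p \<noteq> 0" "q \<noteq> 0" "0 \<notin> R" "p \<notin> R" "q \<notin> R"
    and x: "x \<in> convex hull (insert 0 (insert p (insert q R)))"
    and e: "e \<bullet> p = 1" "e \<bullet> q = -1" "\<forall>r\<in>R. e \<bullet> r = 0" and ex: "e \<bullet> x \<ge> 0"
    and C: "convex C" "0 \<in> C" "P \<in> C" "(1/2) *\<^sub>R (p+q) \<in> C" "R \<subseteq> C"
    and P: "P = p \<or> e \<bullet> x = 0"
  shows "x \<in> C"
proof -
  let ?V = "insert 0 (insert p (insert q R))"
  have fV: "finite ?V" using R by simp
  obtain l where l0: "\<forall>v\<in>?V. 0 \<le> l v" and l1: "sum l ?V = 1" and lx: "(\<Sum>v\<in>?V. l v *\<^sub>R v) = x"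
    using x by (auto simp: convex_hull_finite[OF fV])
  have xe: "x = l p *\<^sub>R p + l q *\<^sub>R q + (\<Sum>r\<in>R. l r *\<^sub>R r)"
    using lx sum4[OF R d, of "\<lambda>v. l v *\<^sub>R v"] by simp
  have "e \<bullet> x = l p - l q"
  proof -
    have "e \<bullet> (\<Sum>r\<in>R. l r *\<^sub>R r) = (\<Sum>r\<in>R. l r * (e \<bullet> r))" by (simp add: inner_sum_right)
    also have "\<dots> = 0" using e(3) by simp
    finally show ?thesis using e by (simp add: xe inner_add_right)
  qed
  with ex have lpq: "l p \<ge> l q" by simp
  define \<mu> where "\<mu> v = (if v = p then l p - l q else if v = q then 2 * l q else l v)" for v
  define \<phi> where "\<phi> v = (if v = p then P else if v = q then (1/2) *\<^sub>R (p+q) else v)" for v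
  have sR: "sum \<mu> R = sum l R" using d by (intro sum.cong) (auto simp: \<mu>_def)
  have sR2: "(\<Sum>v\<in>R. \<mu> v *\<^sub>R \<phi> v) = (\<Sum>r\<in>R. l r *\<^sub>R r)" using d by (intro sum.cong) (auto simp: \<mu>_def \<phi>_def)
  have "(\<Sum>v\<in>?V. \<mu> v *\<^sub>R \<phi> v) \<in> C"
  proof (rule convex_sum[OF fV C(1)])
    show "sum \<mu> ?V = 1" using l1 sum4[OF R d, of l] sum4[OF R d, of \<mu>] sR d by (simp add: \<mu>_def)
    show "0 \<le> \<mu> i" if "i \<in> ?V" for i using l0 that lpq by (auto simp: \<mu>_def)
    show "\<phi> i \<in> C" if "i \<in> ?V" for i using that C by (auto simp: \<phi>_def)
  qed
  moreover have "(\<Sum>v\<in>?V. \<mu> v *\<^sub>R \<phi> v) = x"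
  proof -
    have "(\<Sum>v\<in>?V. \<mu> v *\<^sub>R \<phi> v) = (l p - l q) *\<^sub>R P + (2 * l q) *\<^sub>R ((1/2) *\<^sub>R (p+q)) + (\<Sum>r\<in>R. l r *\<^sub>R r)"
      using sum4[OF R d, of "\<lambda>v. \<mu> v *\<^sub>R \<phi> v"] sR2 d by (simp add: \<mu>_def \<phi>_def)
    also have "\<dots> = x"
      using P \<open>e \<bullet> x = l p - l q\<close> by (auto simp: xe algebra_simps)
    finally show ?thesis .
  qed
  ultimately show ?thesis by simp
qed

lemma dual_vec:
  fixes x :: "real^'n"
  assumes "x \<notin> span S"
  obtains g where "g \<bullet> x = 1" "\<And>s. s \<in> S \<Longrightarrow> g \<bullet> s = 0"
proof -
  obtain y z where y: "y \<in> span S" and z: "\<And>w. w \<in> span S \<Longrightarrow> orthogonal z w" and xyz: "x = y + z"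
    using orthogonal_subspace_decomp_exists[of S x] by blast
  have z0: "z \<noteq> 0" using assms y xyz by auto
  have zy: "z \<bullet> y = 0" using z[OF y] by (simp add: orthogonal_def)
  show ?thesis
  proof
    show "((1 / (z \<bullet> z)) *\<^sub>R z) \<bullet> x = 1" using z0 zy by (simp add: xyz inner_add_right)
    show "((1 / (z \<bullet> z)) *\<^sub>R z) \<bullet> s = 0" if "s \<in> S" for s
      using z[OF span_base[OF that]] by (simp add: orthogonal_def)
  qed
qed

lemma aff_indep_linear_image:
  fixes f :: "real^'n \<Rightarrow> real^'n"
  assumes lf: "linear f" and inj: "inj f" and V: "\<not> affine_dependent V" "0 \<in> V"
  shows "\<not> affine_dependent (f ` V)"
proof -
  define I where "I = V - {0}"
  have VI: "V = insert 0 I" "0 \<notin> I" using V(2) by (auto simp: I_def)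
  have "\<not> dependent I" using V(1) VI affine_dependent_iff_dependent[of 0 I] by simp
  then have indI: "independent (f ` I)"
    using linear_independent_injective_image[OF lf] inj by (metis inj_on_subset subset_UNIV)
  have f0: "f 0 = 0" using lf by (simp add: linear_0)
  have "0 \<notin> f ` I" using VI(2) inj f0 by (metis image_iff injD)
  then have "\<not> affine_dependent (insert 0 (f ` I))"
    using indI affine_dependent_iff_dependent[of 0 "f ` I"] by simp
  moreover have "f ` V = insert 0 (f ` I)" using VI f0 by simp
  ultimately show ?thesis by simp
qed

lemma simplex_of:
  assumes "finite V" "\<not> affine_dependent V" "0 \<in> V"
  shows "convex hull V \<in> simplices_o"
  using assms unfolding simplices_o_def by blast

lemma adjoint_compose:
  fixes f g :: "real^'n \<Rightarrow> real^'n"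
  assumes "linear f" "linear g"
  shows "adjoint (f \<circ> g) = adjoint g \<circ> adjoint f"
  by (rule adjoint_unique) (simp add: adjoint_clauses assms)

lemma rk1_coef:
  fixes a b y :: "real^'n"
  assumes "1 + a \<bullet> b \<noteq> 0"
  shows "(b \<bullet> y / (1 + a \<bullet> b)) + (b \<bullet> a * (b \<bullet> y) / (1 + a \<bullet> b)) = b \<bullet> y"
proof -
  have "(b \<bullet> y / (1 + a \<bullet> b)) + (b \<bullet> a * (b \<bullet> y) / (1 + a \<bullet> b)) = (b \<bullet> y) * (1 + a \<bullet> b) / (1 + a \<bullet> b)"
    by (simp add: add_divide_distrib[symmetric] algebra_simps inner_commute)
  then show ?thesis using assms by simp
qed

lemma rk1_inv1:
  fixes a b y :: "real^'n"
  assumes "1 + a \<bullet> b \<noteq> 0"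
  shows "rk1 a b (rk1 (- (1 / (1 + a \<bullet> b)) *\<^sub>R a) b y) = y"
proof -
  have "((b \<bullet> y / (1 + a \<bullet> b)) + (b \<bullet> a * (b \<bullet> y) / (1 + a \<bullet> b))) *\<^sub>R a = (b \<bullet> y) *\<^sub>R a"
    using rk1_coef[OF assms] by simp
  then show ?thesis by (simp add: rk1_def inner_add_right algebra_simps scaleR_left_distrib)
qed

lemma rk1_inv2:
  fixes a b y :: "real^'n"
  assumes "1 + a \<bullet> b \<noteq> 0"
  shows "rk1 (- (1 / (1 + a \<bullet> b)) *\<^sub>R a) b (rk1 a b y) = y"
proof -
  have "((b \<bullet> y / (1 + a \<bullet> b)) + (b \<bullet> a * (b \<bullet> y) / (1 + a \<bullet> b))) *\<^sub>R a = (b \<bullet> y) *\<^sub>R a"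
    using rk1_coef[OF assms] by simp
  then show ?thesis by (simp add: rk1_def inner_add_right algebra_simps scaleR_left_distrib)
qed

lemma half_piece:
  fixes Z :: "(real^'n) set \<Rightarrow> (real^'n) set" and p q u g :: "real^'n"
  assumes SL: "SL_contravariant_on_simplices Z"
    and R: "finite R" and ind: "\<not> affine_dependent (insert 0 (insert p (insert q R)))"
    and u: "u \<noteq> 0" "u \<bullet> p = 0" "u \<bullet> q = 0" "\<forall>r\<in>R. u \<bullet> r = 0"
    and g: "g \<bullet> q = 1" "g \<bullet> p = 0" "\<forall>r\<in>R. g \<bullet> r = 0"
    and line: "\<forall>y\<in>Z (convex hull (insert 0 (insert p (insert q R)))). \<exists>c. y = c *\<^sub>R u"
  shows "\<not> affine_dependent (insert 0 (insert p (insert ((1/2) *\<^sub>R (p+q)) R)))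
    \<and> Z (convex hull (insert 0 (insert p (insert ((1/2) *\<^sub>R (p+q)) R))))
       = (\<lambda>y. (1/2) *\<^sub>R y) ` Z (convex hull (insert 0 (insert p (insert q R))))"
proof -
  define V where "V = insert 0 (insert p (insert q R))"
  define m where "m = (1/2) *\<^sub>R (p+q)"
  define d where "d = m - q"
  define c where "c = 1 / (u \<bullet> u)"
  have uu: "u \<bullet> u \<noteq> 0" using u by simp
  have cuu: "(c *\<^sub>R u) \<bullet> u = 1" "u \<bullet> (c *\<^sub>R u) = 1" using uu by (simp_all add: c_def)
  have dg: "d \<bullet> g = -1/2" "g \<bullet> d = -1/2" using g
    by (simp_all add: d_def m_def inner_diff_left inner_diff_right inner_add_left inner_add_right inner_commute)
  have "u \<bullet> d = 0" using u by (simp add: d_def m_def inner_diff_right inner_add_right)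
  then have du: "d \<bullet> u = 0" by (simp add: inner_commute)
  define f1 where "f1 = rk1 (c *\<^sub>R u) u"
  define f2 where "f2 = rk1 d g"
  define f where "f = f1 \<circ> f2"
  define inv1 where "inv1 = rk1 (- (1 / (1 + u \<bullet> (c *\<^sub>R u))) *\<^sub>R u) (c *\<^sub>R u)"
  define inv2 where "inv2 = rk1 (- (1 / (1 + g \<bullet> d)) *\<^sub>R g) d"
  define h where "h = inv1 \<circ> inv2"
  have lf: "linear f" unfolding f_def f1_def f2_def by (intro linear_compose linear_rk1)
  have lh: "linear h" unfolding h_def inv1_def inv2_def by (intro linear_compose linear_rk1)
  have det: "det (matrix f) = 1"
  proof -
    have "matrix f = matrix f1 ** matrix f2"
      unfolding f_def f1_def f2_def by (rule matrix_compose[OF linear_rk1 linear_rk1])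
    then show ?thesis unfolding f1_def f2_def using uu by (simp add: det_mul det_rk1 c_def dg)
  qed
  have adj: "adjoint f = rk1 g d \<circ> rk1 u (c *\<^sub>R u)"
    unfolding f_def f1_def f2_def by (simp add: adjoint_compose linear_rk1 adjoint_rk1)
  have n1: "1 + u \<bullet> (c *\<^sub>R u) \<noteq> 0" using cuu by simp
  have n2: "1 + g \<bullet> d \<noteq> 0" using dg by simp
  have i1: "adjoint f (h y) = y" for y
    unfolding adj h_def inv1_def inv2_def by (simp only: o_apply rk1_inv1[OF n1] rk1_inv1[OF n2])
  have i2: "h (adjoint f y) = y" for y
    unfolding adj h_def inv1_def inv2_def by (simp only: o_apply rk1_inv2[OF n1] rk1_inv2[OF n2])
  have inj: "inj f" using det det_nz_iff_inj[OF lf] by simp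
  have fin: "finite V" using R by (simp add: V_def)
  have T: "convex hull V \<in> simplices_o" using simplex_of[OF fin] ind by (simp add: V_def)
  have Zf: "Z (f ` (convex hull V)) = h ` Z (convex hull V)"
    by (rule contra[OF SL T lf lh det i1 i2])
  have fix1: "f1 x = x" if "u \<bullet> x = 0" for x using that by (simp add: f1_def rk1_def inner_commute)
  have um: "u \<bullet> m = 0" using u by (simp add: m_def inner_add_right)
  have fV: "f ` V = insert 0 (insert p (insert m R))"
  proof -
    have "f 0 = 0" by (simp add: f_def f1_def f2_def rk1_def)
    moreover have "f p = p" using g u fix1 by (simp add: f_def f2_def rk1_def)
    moreover have "f q = m" using g um fix1 by (simp add: f_def f2_def rk1_def d_def)
    moreover have "f r = r" if "r \<in> R" for r using g u fix1 that by (simp add: f_def f2_def rk1_def)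
    ultimately show ?thesis unfolding V_def by (auto simp: image_iff)
  qed
  have ind': "\<not> affine_dependent (insert 0 (insert p (insert m R)))"
    using aff_indep_linear_image[OF lf inj, of V] ind fV by (simp add: V_def)
  have "f ` (convex hull V) = convex hull (insert 0 (insert p (insert m R)))"
    using convex_hull_linear_image[OF lf, of V] fV by simp
  moreover have "h ` Z (convex hull V) = (\<lambda>y. (1/2) *\<^sub>R y) ` Z (convex hull V)"
  proof (rule image_cong[OF refl])
    fix y assume "y \<in> Z (convex hull V)"
    then obtain s where s: "y = s *\<^sub>R u" using line by (auto simp: V_def)
    have "inv2 y = y" using du by (simp add: inv2_def rk1_def s inner_commute)
    moreover have "inv1 y = (1/2) *\<^sub>R y"
    proof -
      have a: "(c *\<^sub>R u) \<bullet> y = s" using uu by (simp add: s c_def)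
      have b: "1 + u \<bullet> (c *\<^sub>R u) = 2" using uu by (simp add: c_def)
      have "inv1 y = y + s *\<^sub>R (- ((1/2) *\<^sub>R u))" unfolding inv1_def rk1_def a b by simp
      also have "\<dots> = (1/2) *\<^sub>R y" by (simp add: s vec_eq_iff)
      finally show ?thesis .
    qed
    ultimately show "h y = (1/2) *\<^sub>R y" by (simp add: h_def)
  qed
  ultimately show ?thesis using ind' Zf by (simp add: m_def V_def)
qed

lemma indep_not_span:
  fixes I :: "(real^'n) set"
  assumes "\<not> dependent I" "a \<in> I"
  shows "a \<notin> span (I - {a})"
  using assms unfolding dependent_def by blast

lemma hyper:
  fixes Z :: "(real^'n) set \<Rightarrow> (real^'n) set" and p q :: "real^'n"
  assumes SL: "SL_contravariant_on_simplices Z"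
    and bodies: "\<forall>T \<in> simplices_o. Z T \<in> convex_bodies_o"
    and val: "linf_valuation_on_simplices Z"
    and R: "finite R" and d: "p \<noteq> q" "p \<noteq> 0" "q \<noteq> 0" "0 \<notin> R" "p \<notin> R" "q \<notin> R"
    and ind: "\<not> affine_dependent (insert 0 (insert p (insert q R)))"
    and cardV: "card (insert 0 (insert p (insert q R))) = CARD('n)"
  shows "Z (convex hull (insert 0 (insert p (insert q R)))) = {0}"
proof -
  define V where "V = insert 0 (insert p (insert q R))"
  define I where "I = insert p (insert q R)"
  define T where "T = convex hull V"
  have fV: "finite V" using R by (simp add: V_def)
  have TS: "T \<in> simplices_o" unfolding T_def using simplex_of[OF fV] ind by (simp add: V_def)
  have VI: "V = insert 0 I" "0 \<notin> I" using d by (auto simp: V_def I_def)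
  have indI: "\<not> dependent I" using ind VI affine_dependent_iff_dependent[of 0 I] by (simp add: V_def)
  have cV: "card V = card R + 3" using d R by (simp add: V_def)
  have cI: "card I = card R + 2" using d R by (simp add: I_def)
  have "dim V \<le> card I"
    by (rule dim_le_card) (auto simp: VI span_zero span_base I_def R)
  then have "dim V < DIM(real^'n)" using cV cI cardV[folded V_def] by simp
  then obtain u where u0: "u \<noteq> 0" and uo: "\<And>y. y \<in> span V \<Longrightarrow> orthogonal u y"
    using orthogonal_to_subspace_exists[of V] by blast
  have uV: "u \<bullet> v = 0" if "v \<in> V" for v using uo[OF span_base[OF that]] by (simp add: orthogonal_def)
  have up: "u \<bullet> p = 0" and uq: "u \<bullet> q = 0" and uR: "\<forall>r\<in>R. u \<bullet> r = 0" using uV by (auto simp: V_def)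
  have uT: "\<forall>x\<in>T. u \<bullet> x = 0"
    using uo convex_hull_subset_span[of V] by (auto simp: T_def orthogonal_def)
  have ZT: "compact (Z T)" "convex (Z T)" "0 \<in> Z T" using bodies TS by (auto simp: convex_bodies_o_def)
  have line: "\<forall>y\<in>Z T. \<exists>c. y = c *\<^sub>R u"
    using inv_line[OF SL TS compact_imp_bounded[OF ZT(1)] u0 uT] by blast
  have "q \<notin> span (I - {q})" by (rule indep_not_span[OF indI]) (simp add: I_def)
  moreover have "I - {q} = insert p R" using d by (auto simp: I_def)
  ultimately obtain gq where gq: "gq \<bullet> q = 1" "\<And>s. s \<in> insert p R \<Longrightarrow> gq \<bullet> s = 0"
    using dual_vec by metis
  have "p \<notin> span (I - {p})" by (rule indep_not_span[OF indI]) (simp add: I_def)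
  moreover have "I - {p} = insert q R" using d by (auto simp: I_def)
  ultimately obtain gp where gp: "gp \<bullet> p = 1" "\<And>s. s \<in> insert q R \<Longrightarrow> gp \<bullet> s = 0"
    using dual_vec by metis
  define m where "m = (1/2) *\<^sub>R (p + q)"
  define W1 where "W1 = insert 0 (insert p (insert m R))"
  define W2 where "W2 = insert 0 (insert q (insert m R))"
  define W0 where "W0 = insert 0 (insert m R)"
  have H1: "\<not> affine_dependent W1 \<and> Z (convex hull W1) = (\<lambda>y. (1/2) *\<^sub>R y) ` Z T"
    using half_piece[OF SL R ind u0 up uq uR, of gq] gq line
    by (simp add: W1_def m_def T_def V_def)
  have V': "insert 0 (insert q (insert p R)) = V" by (auto simp: V_def)
  have H2: "\<not> affine_dependent W2 \<and> Z (convex hull W2) = (\<lambda>y. (1/2) *\<^sub>R y) ` Z T"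
    using half_piece[OF SL R _ u0 uq up uR, of gp] gp line ind V'
    by (simp add: W2_def m_def T_def V_def add.commute)
  define e where "e = gp - gq"
  have ep: "e \<bullet> p = 1" and eq: "e \<bullet> q = -1" and eR: "\<forall>r\<in>R. e \<bullet> r = 0"
    using gp gq by (auto simp: e_def inner_diff_left)
  have em: "e \<bullet> m = 0" using ep eq by (simp add: m_def inner_add_right)
  have VT: "V \<subseteq> T" by (simp add: T_def hull_subset)
  have cT: "convex T" by (simp add: T_def)
  have mT: "m \<in> T"
  proof -
    have "p \<in> T" "q \<in> T" using VT by (auto simp: V_def)
    then have "(1/2) *\<^sub>R p + (1/2) *\<^sub>R q \<in> T" using cT by (intro convexD) auto
    then show ?thesis by (simp add: m_def scaleR_add_right)
  qed
  have W1T: "W1 \<subseteq> T" and W2T: "W2 \<subseteq> T" and W0T: "W0 \<subseteq> T"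
    using VT mT by (auto simp: W1_def W2_def W0_def V_def)
  have d': "q \<noteq> p" using d by auto
  have T1: "convex hull W1 = T \<inter> {x. e \<bullet> x \<ge> 0}"
  proof
    show "convex hull W1 \<subseteq> T \<inter> {x. e \<bullet> x \<ge> 0}"
      by (rule hull_minimal) (use W1T ep em eR in \<open>auto simp: W1_def intro: convex_Int cT convex_halfspace_ge\<close>)
    show "T \<inter> {x. e \<bullet> x \<ge> 0} \<subseteq> convex hull W1"
    proof
      fix x assume x: "x \<in> T \<inter> {x. e \<bullet> x \<ge> 0}"
      show "x \<in> convex hull W1"
        by (rule cut[OF R d, of x e _ p]) (use x ep eq eR in \<open>auto simp: T_def V_def W1_def m_def hull_subset[THEN subsetD]\<close>)
    qed
  qed
  have T2: "convex hull W2 = T \<inter> {x. e \<bullet> x \<le> 0}"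
  proof
    show "convex hull W2 \<subseteq> T \<inter> {x. e \<bullet> x \<le> 0}"
      by (rule hull_minimal) (use W2T eq em eR in \<open>auto simp: W2_def intro: convex_Int cT convex_halfspace_le\<close>)
    show "T \<inter> {x. e \<bullet> x \<le> 0} \<subseteq> convex hull W2"
    proof
      fix x assume x: "x \<in> T \<inter> {x. e \<bullet> x \<le> 0}"
      show "x \<in> convex hull W2"
        by (rule cut[OF R d' d(3) d(2) d(4) d(6) d(5), of x "-e" _ q])
          (use x ep eq eR V' in \<open>auto simp: T_def W2_def m_def add.commute hull_subset[THEN subsetD]\<close>)
    qed
  qed
  have T0: "convex hull W0 = T \<inter> {x. e \<bullet> x = 0}"
  proof
    show "convex hull W0 \<subseteq> T \<inter> {x. e \<bullet> x = 0}"
      by (rule hull_minimal) (use W0T em eR in \<open>auto simp: W0_def intro: convex_Int cT convex_hyperplane\<close>)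
    show "T \<inter> {x. e \<bullet> x = 0} \<subseteq> convex hull W0"
    proof
      fix x assume x: "x \<in> T \<inter> {x. e \<bullet> x = 0}"
      show "x \<in> convex hull W0"
        by (rule cut[OF R d, of x e _ m]) (use x ep eq eR in \<open>auto simp: T_def V_def W0_def m_def hull_subset[THEN subsetD]\<close>)
    qed
  qed
  have un: "convex hull W1 \<union> convex hull W2 = T" using T1 T2 by auto
  have it: "convex hull W1 \<inter> convex hull W2 = convex hull W0" using T1 T2 T0 by auto
  have S1: "convex hull W1 \<in> simplices_o" using H1 R by (intro simplex_of) (auto simp: W1_def)
  have S2: "convex hull W2 \<in> simplices_o" using H2 R by (intro simplex_of) (auto simp: W2_def)
  have S0: "convex hull W0 \<in> simplices_o"
    using H1 R affine_independent_subset[of W1 W0] by (intro simplex_of) (auto simp: W0_def W1_def)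
  have Z0: "Z (convex hull W0) = {0}"
  proof (rule lowdim[OF SL bodies S0])
    show "convex hull W0 \<subseteq> span (insert m R)"
      using convex_hull_subset_span[of W0] by (simp add: W0_def)
    have "dim (insert m R) \<le> card (insert m R)" using R by (intro dim_le_card) (auto simp: span_base)
    also have "\<dots> \<le> card R + 1" using R by (simp add: card_insert_if)
    finally show "dim (insert m R) + 2 \<le> CARD('n)" using cV cardV[folded V_def] by simp
  qed
  have "linf_plus (Z T) (Z (convex hull W0)) = linf_plus (Z (convex hull W1)) (Z (convex hull W2))"
    using val S1 S2 un it TS S0 unfolding linf_valuation_on_simplices_def by metis
  then have "convex hull (Z T \<union> {0}) = convex hull ((\<lambda>y. (1/2) *\<^sub>R y) ` Z T)"
    using Z0 H1 H2 by (simp add: linf_plus_def)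
  moreover have "Z T \<union> {0} = Z T" using ZT by auto
  ultimately have half: "Z T = (\<lambda>y. (1/2) *\<^sub>R y) ` Z T"
    using convex_hull_eq[THEN iffD2, OF ZT(2)] convex_hull_eq[THEN iffD2, OF convex_scaling[OF ZT(2), of "1/2"]]
    by simp
  obtain z where z: "z \<in> Z T" and zmax: "\<And>y. y \<in> Z T \<Longrightarrow> norm y \<le> norm z"
    using continuous_attains_sup[OF ZT(1), of norm] ZT(3) by (auto intro: continuous_intros)
  obtain w where w: "w \<in> Z T" and zw: "z = (1/2) *\<^sub>R w" using z half by blast
  have "norm w \<le> norm z" by (rule zmax[OF w])
  then have "norm z \<le> 0" using zw by simp
  then have "Z T \<subseteq> {0}" using zmax by (auto intro: order_trans)
  then show ?thesis using ZT(3) by (auto simp: T_def V_def)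
qed

theorem lemma3p1:
  fixes Z :: "(real^'n) set \<Rightarrow> (real^'n) set"
  assumes "CARD('n) \<ge> 3"
    and "\<forall>T \<in> simplices_o. Z T \<in> convex_bodies_o"
    and "SL_contravariant_on_simplices Z"
    and "linf_valuation_on_simplices Z"
  shows "\<forall>T \<in> simplices_o. aff_dim T < int CARD('n) \<longrightarrow> Z T = {0}"
proof (intro ballI impI)
  fix T :: "(real^'n) set"
  assume TS: "T \<in> simplices_o" and ad: "aff_dim T < int CARD('n)"
  obtain V where V: "finite V" "\<not> affine_dependent V" "0 \<in> V" "T = convex hull V"
    using TS by (auto simp: simplices_o_def)
  have "int (card V) = aff_dim T + 1"
    using aff_dim_affine_independent[OF V(2)] aff_dim_convex_hull[of V] V(4) by simp
  with ad have cV: "card V \<le> CARD('n)" by simp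
  show "Z T = {0}"
  proof (cases "card V + 1 \<le> CARD('n)")
    case True
    show ?thesis
    proof (rule lowdim[OF assms(3) assms(2) TS])
      show "T \<subseteq> span V" using V(4) convex_hull_subset_span by blast
      have "dim V \<le> card (V - {0})" using V(1) by (intro dim_le_card) (auto simp: span_base span_zero)
      also have "\<dots> = card V - 1" using V(1,3) by simp
      finally have "dim V \<le> card V - 1" .
      moreover have "card V > 0" using V(1,3) card_gt_0_iff by blast
      ultimately show "dim V + 2 \<le> CARD('n)" using True by linarith
    qed
  next
    case False
    with cV have cVn: "card V = CARD('n)" by simp
    have "card (V - {0}) \<ge> 2" using cVn assms(1) V(1,3) by simp
    then obtain p where p: "p \<in> V - {0}" by (metis all_not_in_conv card.empty not_numeral_le_zero)
    have "card (V - {0} - {p}) \<ge> 1" using \<open>card (V - {0}) \<ge> 2\<close> p V(1) by simp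
    then obtain q where q: "q \<in> V - {0} - {p}" by (metis all_not_in_conv card.empty not_one_le_zero)
    define R where "R = V - {0, p, q}"
    have VR: "V = insert 0 (insert p (insert q R))" using p q V(3) by (auto simp: R_def)
    have R: "finite R" using V(1) by (simp add: R_def)
    have d: "p \<noteq> q" "p \<noteq> 0" "q \<noteq> 0" "0 \<notin> R" "p \<notin> R" "q \<notin> R" using p q by (auto simp: R_def)
    show ?thesis
      unfolding V(4) VR
      by (rule hyper[OF assms(3) assms(2) assms(4) R d]) (use V VR cVn in auto)
  qed
qed

end
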